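(* Let $Q,\mathcal{R},\tilde R\in\mathbb{Z}^+$ and $a_1,\dots,a_{\mathcal{R}}\in\mathbb{R}$ be such that $\{a_1,\dots,a_{\mathcal{R}},1\}$ is rationally independent. Suppose $Y=X\beta^*\in\mathbb{R}$, where $X=(X_1,\dots,X_p)\in\mathbb{R}^{1\times p}$ is a jointly continuous random vector and $\beta^*\in\mathbb{R}^p$ satisfies: for each $i\in[p]$, either $\beta^*_i=K_i/Q$ for some $K_i\in\mathbb{Z}$ with $\beta^*_i\in[-\tilde R,\tilde R]$, or $\beta^*_i\in\{a_1,\dots,a_{\mathcal{R}}\}$. Suppose the learner has access to $\hat Q,\hat R\in\mathbb{Z}^+$ with $Q$ dividing $\hat Q$ and $\hat R\ge\tilde R$. Then the integer relation algorithm with input $(\hat QY,\ X_ia_j,\ X_i:\ i\in[p],j\in[\mathcal{R}])$ recovers $\beta^*$ with probability one, in time at most polynomial in $p,\mathcal{R},\log\hat Q$ and $\log\hat R$.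
   Context: A random vector in $\mathbb{R}^p$ is jointly continuous if it has a joint density with respect to Lebesgue measure. A finite set of reals is rationally independent if the only rational linear combination of its elements equal to $0$ is the trivial one. An integer relation for $b\in\mathbb{R}^k$ is a nonzero $m\in\mathbb{Z}^k$ with $\langle b,m\rangle=0$. The integer relation algorithm (IRA, e.g. PSLQ): given $b\in\mathbb{R}^k$ admitting an integer relation, it outputs an integer relation for $b$ after $O(k^3+k^2\log\|m\|)$ arithmetic operations on real numbers, where $m$ is an integer relation of smallest Euclidean norm; arithmetic operations on reals are counted at unit cost. "Recovers $\beta^*$" means that $\beta^*$ can be read off from the integer relation returned. *)

theory Defs
  imports "HOL-Probability.Probability"
begin

definition is_int_rel :: "real list \<Rightarrow> int list \<Rightarrow> bool" where
  "is_int_rel b m \<longleftrightarrow> length m = length b \<and> (\<exists>i<length m. m ! i \<noteq> 0) \<and>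
     (\<Sum>i<length b. b ! i * of_int (m ! i)) = 0"

definition has_int_rel :: "real list \<Rightarrow> bool" where
  "has_int_rel b \<longleftrightarrow> (\<exists>m. is_int_rel b m)"

definition int_vec_norm :: "int list \<Rightarrow> real" where
  "int_vec_norm m = sqrt (\<Sum>i<length m. (of_int (m ! i))\<^sup>2)"

definition min_rel_norm :: "real list \<Rightarrow> real" where
  "min_rel_norm b = Inf (int_vec_norm ` {m. is_int_rel b m})"

text \<open>Specification of an integer relation algorithm (e.g. PSLQ): on every input admitting
  an integer relation it outputs an integer relation, using at most
  C (k^3 + k^2 log ||m||) unit-cost real arithmetic operations, m a smallest-norm relation.\<close>
definition IRA_spec :: "(real list \<Rightarrow> int list) \<Rightarrow> (real list \<Rightarrow> real) \<Rightarrow> real \<Rightarrow> bool" where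
  "IRA_spec ira cost C \<longleftrightarrow> (\<forall>b. has_int_rel b \<longrightarrow>
     is_int_rel b (ira b) \<and>
     cost b \<le> C * (real (length b) ^ 3 + real (length b) ^ 2 * ln (min_rel_norm b)))"

definition rat_indep_with_one :: "nat \<Rightarrow> (nat \<Rightarrow> real) \<Rightarrow> bool" where
  "rat_indep_with_one R a \<longleftrightarrow> (\<forall>(q::nat \<Rightarrow> rat) (q0::rat).
     (\<Sum>j<R. of_rat (q j) * a j) + of_rat q0 = 0 \<longrightarrow> q0 = 0 \<and> (\<forall>j<R. q j = 0))"

definition ira_input :: "int \<Rightarrow> nat \<Rightarrow> nat \<Rightarrow> (nat \<Rightarrow> real) \<Rightarrow> (nat \<Rightarrow> real) \<Rightarrow> real \<Rightarrow> real list" where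
  "ira_input Qh p R a x y =
     (of_int Qh * y) # concat (map (\<lambda>i. map (\<lambda>j. x i * a j) [0..<R]) [0..<p]) @ map x [0..<p]"

definition decode :: "int \<Rightarrow> nat \<Rightarrow> nat \<Rightarrow> (nat \<Rightarrow> real) \<Rightarrow> int list \<Rightarrow> nat \<Rightarrow> real" where
  "decode Qh p R a m i =
     - ((\<Sum>j<R. of_int (m ! (1 + i * R + j)) * a j) + of_int (m ! (1 + p * R + i)))
       / (of_int (m ! 0) * of_int Qh)"

definition lebesgue_Rp :: "nat \<Rightarrow> (nat \<Rightarrow> real) measure" where
  "lebesgue_Rp p = (\<Pi>\<^sub>M i\<in>{..<p}. lborel)"

end

theory Submission
  imports Defs
begin

lemma hyperplane_null:
  fixes c :: "nat \<Rightarrow> real"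
  assumes i0: "i0 < p" and c0: "c i0 \<noteq> 0"
  shows "AE x in lebesgue_Rp p. (\<Sum>i<p. x i * c i) \<noteq> 0"
proof -
  interpret P: product_sigma_finite "\<lambda>_::nat. lborel::real measure"
    by (simp add: product_sigma_finite_def lborel.sigma_finite_measure_axioms)
  define J where "J = {..<p} - {i0}"
  have IJ: "{..<p} = insert i0 J" using i0 by (auto simp: J_def)
  have fJ: "finite J" "i0 \<notin> J" by (auto simp: J_def)
  define M where "M = lebesgue_Rp p"
  have M: "M = Pi\<^sub>M (insert i0 J) (\<lambda>_. lborel)" unfolding M_def lebesgue_Rp_def IJ ..
  define H where "H = {x\<in>space M. (\<Sum>i<p. x i * c i) = 0}"
  have fm: "(\<lambda>x. \<Sum>i<p. x i * c i) \<in> borel_measurable M" unfolding M IJ[symmetric] by (intro borel_measurable_sum borel_measurable_times measurable_component_singleton) auto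
  have Hm: "H \<in> sets M" unfolding H_def
    using measurable_equality_set[OF fm borel_measurable_const[of 0]] by simp
  have sumsplit: "(\<Sum>i<p. x i * c i) = x i0 * c i0 + (\<Sum>i\<in>J. x i * c i)" for x
    unfolding IJ using fJ by simp
  have "emeasure M H = (\<integral>\<^sup>+ x. indicator H x \<partial>M)"
    using Hm by simp
  also have "\<dots> = (\<integral>\<^sup>+ x. (\<integral>\<^sup>+ y. indicator H (x(i0 := y)) \<partial>lborel) \<partial>(Pi\<^sub>M J (\<lambda>_. lborel)))"
    unfolding M using fJ Hm[unfolded M]
    by (intro P.product_nn_integral_insert) auto
  also have "\<dots> = (\<integral>\<^sup>+ x. 0 \<partial>(Pi\<^sub>M J (\<lambda>_. lborel::real measure)))"
  proof (rule nn_integral_cong)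
    fix x
    define t where "t = - (\<Sum>i\<in>J. x i * c i) / c i0"
    have "AE y in lborel. y \<noteq> t" by (rule AE_lborel_singleton)
    then have "AE y in lborel. indicator H (x(i0 := y)) = (0::ennreal)"
    proof (rule eventually_mono)
      fix y :: real assume yt: "y \<noteq> t"
      have "(\<Sum>i\<in>J. (x(i0 := y)) i * c i) = (\<Sum>i\<in>J. x i * c i)"
        using fJ by (intro sum.cong) auto
      then have "(\<Sum>i<p. (x(i0 := y)) i * c i) = y * c i0 + (\<Sum>i\<in>J. x i * c i)"
        using sumsplit[of "x(i0:=y)"] by simp
      also have "\<dots> \<noteq> 0" using yt c0 unfolding t_def by (auto simp: field_simps)
      finally show "indicator H (x(i0 := y)) = (0::ennreal)" unfolding H_def by auto
    qed
    then show "(\<integral>\<^sup>+ y. indicator H (x(i0 := y)) \<partial>lborel) = 0"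
      by (simp add: nn_integral_cong_AE)
  qed
  also have "\<dots> = 0" by simp
  finally have "H \<in> null_sets M" using Hm by auto
  then show ?thesis unfolding M_def[symmetric]
    by (rule AE_I') (auto simp: H_def)
qed


lemma sum_split_add: "(\<Sum>t<m+n. g t) = (\<Sum>t<m. g t) + (\<Sum>t<n. g (m+t))" for g :: "nat \<Rightarrow> real"
  by (induction n) (auto simp: add.assoc)

lemma sum_block: "(\<Sum>t<p*R. g t) = (\<Sum>i<p. \<Sum>j<R. g (i*R+j))" for g :: "nat \<Rightarrow> real"
proof (induction p)
  case (Suc p)
  have "(\<Sum>t<Suc p*R. g t) = (\<Sum>t<p*R+R. g t)" by (simp add: add.commute)
  also have "\<dots> = (\<Sum>t<p*R. g t) + (\<Sum>j<R. g (p*R+j))" by (rule sum_split_add)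
  finally show ?case using Suc by simp
qed simp

lemma nth_concat_uniform:
  assumes "\<And>i. i < p \<Longrightarrow> length (F i) = R" "i < p" "j < R"
  shows "concat (map F [0..<p]) ! (i*R+j) = F i ! j"
  using assms
proof (induction p)
  case (Suc p)
  have len: "length (concat (map F [0..<p])) = p * R"
    using Suc.prems(1) by (induction p) auto
  show ?case
  proof (cases "i < p")
    case True
    have "i*R+j < p*R"
    proof -
      have "i*R+j < i*R+R" using Suc.prems by simp
      also have "\<dots> = Suc i * R" by simp
      also have "\<dots> \<le> p*R" using True by (intro mult_right_mono) auto
      finally show ?thesis .
    qed
    then show ?thesis using Suc True by (simp add: nth_append len)
  next
    case False
    then have "i = p" using Suc.prems by simp
    then show ?thesis using Suc.prems by (simp add: nth_append len)
  qed
qed simp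

lemma ira_input_len: "length (ira_input Qh p R a x y) = 1 + p*R + p"
proof -
  have "length (concat (map (\<lambda>i. map (\<lambda>j. x i * a j) [0..<R]) [0..<p])) = p*R"
    by (induction p) auto
  then show ?thesis by (simp add: ira_input_def)
qed

lemma ira_input_nth:
  shows "ira_input Qh p R a x y ! 0 = of_int Qh * y"
    and "i < p \<Longrightarrow> j < R \<Longrightarrow> ira_input Qh p R a x y ! (1 + i*R + j) = x i * a j"
    and "i < p \<Longrightarrow> ira_input Qh p R a x y ! (1 + p*R + i) = x i"
proof -
  have len: "length (concat (map (\<lambda>i. map (\<lambda>j. x i * a j) [0..<R]) [0..<p])) = p*R"
    by (induction p) auto
  show "ira_input Qh p R a x y ! 0 = of_int Qh * y" by (simp add: ira_input_def)
  show "i < p \<Longrightarrow> j < R \<Longrightarrow> ira_input Qh p R a x y ! (1 + i*R + j) = x i * a j"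
  proof -
    assume ij: "i < p" "j < R"
    have lt: "i*R+j < p*R"
    proof -
      have "i*R+j < i*R+R" using ij by simp
      also have "\<dots> = Suc i * R" by simp
      also have "\<dots> \<le> p*R" using ij by (intro mult_right_mono) auto
      finally show ?thesis .
    qed
    have "ira_input Qh p R a x y ! (1 + i*R + j) = concat (map (\<lambda>i. map (\<lambda>j. x i * a j) [0..<R]) [0..<p]) ! (i*R+j)"
      using lt len by (simp add: ira_input_def nth_append)
    also have "\<dots> = x i * a j" using ij by (subst nth_concat_uniform) auto
    finally show ?thesis .
  qed
  show "i < p \<Longrightarrow> ira_input Qh p R a x y ! (1 + p*R + i) = x i"
    using len by (simp add: ira_input_def nth_append)
qed

lemma ira_input_nth_Suc:
  "i < p \<Longrightarrow> j < R \<Longrightarrow> ira_input Qh p R a x y ! Suc (i*R + j) = x i * a j"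
  "i < p \<Longrightarrow> ira_input Qh p R a x y ! Suc (p*R + i) = x i"
  using ira_input_nth(2)[of i p j R Qh a x y] ira_input_nth(3)[of i p Qh R a x y] by simp_all

definition coef :: "int \<Rightarrow> nat \<Rightarrow> nat \<Rightarrow> (nat \<Rightarrow> real) \<Rightarrow> (nat \<Rightarrow> real) \<Rightarrow> int list \<Rightarrow> nat \<Rightarrow> real" where
  "coef Qh p R a \<beta> m i = of_int (m!0) * of_int Qh * \<beta> i + (\<Sum>j<R. of_int (m ! (1 + i*R + j)) * a j)
     + of_int (m ! (1 + p*R + i))"

lemma rel_sum:
  "(\<Sum>idx<length (ira_input Qh p R a x (\<Sum>i<p. x i * \<beta> i)).
      ira_input Qh p R a x (\<Sum>i<p. x i * \<beta> i) ! idx * of_int (m ! idx))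
   = (\<Sum>i<p. x i * coef Qh p R a \<beta> m i)"
proof -
  define b where "b = ira_input Qh p R a x (\<Sum>i<p. x i * \<beta> i)"
  define g where "g idx = b ! idx * of_int (m ! idx)" for idx
  have "(\<Sum>idx<length b. g idx) = (\<Sum>idx<Suc (p*R+p). g idx)"
    unfolding b_def ira_input_len by simp
  also have "\<dots> = g 0 + (\<Sum>t<p*R+p. g (Suc t))" by (rule sum.lessThan_Suc_shift)
  also have "(\<Sum>t<p*R+p. g (Suc t)) = (\<Sum>t<p*R. g (Suc t)) + (\<Sum>i<p. g (Suc (p*R+i)))"
    by (rule sum_split_add)
  also have "(\<Sum>t<p*R. g (Suc t)) = (\<Sum>i<p. \<Sum>j<R. g (Suc (i*R+j)))" by (rule sum_block)
  also have "\<dots> = (\<Sum>i<p. \<Sum>j<R. x i * (of_int (m ! (1 + i*R + j)) * a j))"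
    unfolding g_def b_def
    by (intro sum.cong refl) (simp add: ira_input_nth_Suc)
  also have "(\<Sum>i<p. g (Suc (p*R+i))) = (\<Sum>i<p. x i * of_int (m ! (1 + p*R + i)))"
    unfolding g_def b_def by (intro sum.cong refl) (simp add: ira_input_nth_Suc)
  also have "g 0 = (\<Sum>i<p. x i * (of_int (m!0) * of_int Qh * \<beta> i))"
    unfolding g_def b_def by (simp add: ira_input_nth sum_distrib_left sum_distrib_right mult_ac)
  finally show ?thesis
    unfolding b_def[symmetric] g_def[symmetric] coef_def
    by (simp add: sum.distrib sum_distrib_left distrib_left)
qed


lemma index_cases:
  fixes idx p R :: nat
  assumes "idx < 1 + p*R + p"
  shows "idx = 0 \<or> (\<exists>i<p. \<exists>j<R. idx = 1 + i*R + j) \<or> (\<exists>i<p. idx = 1 + p*R + i)"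
proof (cases "idx = 0")
  case False
  show ?thesis
  proof (cases "idx - 1 < p*R")
    case True
    then have R: "R > 0" by (cases R) auto
    define i where "i = (idx - 1) div R"
    define j where "j = (idx - 1) mod R"
    have "idx - 1 = i*R + j" unfolding i_def j_def by simp
    then have e: "idx = 1 + i*R + j" using False by simp
    have "j < R" unfolding j_def using R by simp
    moreover have "i < p" unfolding i_def using True R
      by (simp add: div_less_iff_less_mult)
    ultimately show ?thesis using e by blast
  next
    case F2: False
    then have "idx = 1 + p*R + (idx - 1 - p*R)" "idx - 1 - p*R < p" using False assms by auto
    then show ?thesis by blast
  qed
qed simp

lemma decode_ok:
  assumes ind: "rat_indep_with_one R a" and Qh: "0 < Qh"
    and len: "length m = 1 + p*R + p" and nz: "\<exists>i<length m. m ! i \<noteq> 0"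
    and c0: "\<forall>i<p. coef Qh p R a \<beta> m i = 0" and ip: "i < p"
  shows "decode Qh p R a m i = \<beta> i"
proof -
  have m0: "m ! 0 \<noteq> 0"
  proof
    assume z: "m ! 0 = 0"
    have allz: "m ! (1 + i*R + j) = 0 \<and> m ! (1 + p*R + i) = 0" if "i < p" "j < R" for i j
    proof -
      have e: "(\<Sum>j<R. of_rat (of_int (m ! (1 + i*R + j))) * a j) + of_rat (of_int (m ! (1 + p*R + i))) = 0"
        using c0 that z unfolding coef_def by (simp add: of_rat_of_int_eq)
      from ind[unfolded rat_indep_with_one_def, rule_format, OF e] that show ?thesis by simp
    qed
    have allz2: "m ! (1 + p*R + i) = 0" if "i < p" for i
    proof -
      have e: "(\<Sum>j<R. of_rat (of_int (m ! (1 + i*R + j))) * a j) + of_rat (of_int (m ! (1 + p*R + i))) = 0"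
        using c0 that z unfolding coef_def by (simp add: of_rat_of_int_eq)
      from ind[unfolded rat_indep_with_one_def, rule_format, OF e] that show ?thesis by simp
    qed
    from nz obtain k where k: "k < length m" "m ! k \<noteq> 0" by blast
    from index_cases[of k p R] k len z allz allz2 show False by auto
  qed
  have "of_int (m!0) * of_int Qh * \<beta> i = - ((\<Sum>j<R. of_int (m ! (1 + i*R + j)) * a j) + of_int (m ! (1 + p*R + i)))"
  proof -
    have "coef Qh p R a \<beta> m i = 0" using c0 ip by blast
    then show ?thesis unfolding coef_def by linarith
  qed
  then show ?thesis unfolding decode_def using m0 Qh
    by (simp add: field_simps)
qed

lemma cost_arith:
  fixes k S L Lq :: real
  assumes "1 \<le> k" "k \<le> S^2" "1 \<le> S" "0 \<le> Lq" "Lq \<le> S" "L \<le> k + Lq"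
  shows "k^3 + k^2 * L \<le> 3 * S^6"
proof -
  have k0: "0 \<le> k" using assms by simp
  have "k^2 * L \<le> k^2 * (k + Lq)" using assms by (intro mult_left_mono) auto
  have k3: "k^3 \<le> S^6"
  proof -
    have "k^3 \<le> (S^2)^3" using assms k0 by (intro power_mono) auto
    then show ?thesis by (simp add: power_mult[symmetric])
  qed
  have k2: "k^2 \<le> S^4"
  proof -
    have "k^2 \<le> (S^2)^2" using assms k0 by (intro power_mono) auto
    then show ?thesis by (simp add: power_mult[symmetric])
  qed
  have "k^2 * Lq \<le> S^4 * S" using k2 assms by (intro mult_mono) auto
  also have "S^4 * S \<le> S^6"
  proof -
    have "S^4 * S = S^5" by (simp add: power_Suc2[symmetric] eval_nat_numeral)
    also have "\<dots> \<le> S^6" using assms by (intro power_increasing) auto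
    finally show ?thesis .
  qed
  finally have "k^2 * Lq \<le> S^6" .
  have "k^2 * L \<le> k^3 + k^2 * Lq" using \<open>k^2 * L \<le> k^2 * (k + Lq)\<close>
    by (simp add: distrib_left power2_eq_square power3_eq_cube)
  then show ?thesis using k3 \<open>k^2 * Lq \<le> S^6\<close> by simp
qed


lemma min_rel_norm_bounds:
  assumes "is_int_rel b m"
  shows "1 \<le> min_rel_norm b" "min_rel_norm b \<le> int_vec_norm m"
proof -
  have ge1: "1 \<le> int_vec_norm m'" if "is_int_rel b m'" for m'
  proof -
    from that obtain i where i: "i < length m'" "m' ! i \<noteq> 0" unfolding is_int_rel_def by blast
    have "1 \<le> (of_int (m' ! i) :: real)\<^sup>2"
    proof -
      have "1 \<le> \<bar>m' ! i\<bar>" using i by simp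
      then have "(1::real) \<le> \<bar>of_int (m' ! i)\<bar>" by linarith
      then have "1^2 \<le> \<bar>(of_int (m' ! i) :: real)\<bar>^2" by (intro power_mono) auto
      then show ?thesis by simp
    qed
    also have "\<dots> \<le> (\<Sum>i<length m'. (of_int (m' ! i))\<^sup>2)"
      using i by (intro member_le_sum) auto
    finally show ?thesis unfolding int_vec_norm_def by simp
  qed
  show "1 \<le> min_rel_norm b" unfolding min_rel_norm_def
    using assms by (intro cInf_greatest) (auto intro: ge1)
  show "min_rel_norm b \<le> int_vec_norm m" unfolding min_rel_norm_def
    using assms by (intro cInf_lower) (auto simp: bdd_below_def int_vec_norm_def intro!: exI[of _ 0] sum_nonneg)
qed

theorem theorem8:
  fixes ira :: "real list \<Rightarrow> int list" and cost :: "real list \<Rightarrow> real" and C :: real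
  assumes "IRA_spec ira cost C"
  shows "\<exists>(c::real) (d::nat). \<forall>(p::nat) (R::nat) (Q::int) (Rt::int) (a::nat \<Rightarrow> real)
     (\<beta>::nat \<Rightarrow> real) (Qh::int) (Rh::int) (f::(nat \<Rightarrow> real) \<Rightarrow> ennreal).
     0 < p \<longrightarrow> 0 < R \<longrightarrow> 0 < Q \<longrightarrow> 0 < Rt \<longrightarrow>
     rat_indep_with_one R a \<longrightarrow>
     (\<forall>i<p. (\<exists>K::int. \<beta> i = of_int K / of_int Q \<and> \<bar>\<beta> i\<bar> \<le> of_int Rt) \<or> (\<exists>j<R. \<beta> i = a j)) \<longrightarrow>
     0 < Qh \<longrightarrow> 0 < Rh \<longrightarrow> Q dvd Qh \<longrightarrow> Rt \<le> Rh \<longrightarrow>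
     f \<in> borel_measurable (lebesgue_Rp p) \<longrightarrow> prob_space (density (lebesgue_Rp p) f) \<longrightarrow>
     (AE x in density (lebesgue_Rp p) f.
        (let b = ira_input Qh p R a x (\<Sum>i<p. x i * \<beta> i) in
          (\<forall>i<p. decode Qh p R a (ira b) i = \<beta> i) \<and>
          cost b \<le> c * (real p + real R + ln (of_int Qh) + ln (of_int Rh) + 1) ^ d))"
proof (rule exI[of _ "3 * max C 0"], rule exI[of _ "6::nat"], intro allI impI)
  fix p R :: nat and Q Rt Qh Rh :: int and a \<beta> :: "nat \<Rightarrow> real" and f :: "(nat \<Rightarrow> real) \<Rightarrow> ennreal"
  assume p: "0 < p" and R: "0 < R" and Q: "0 < Q" and Rt: "0 < Rt"
    and ind: "rat_indep_with_one R a"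
    and beta: "\<forall>i<p. (\<exists>K::int. \<beta> i = of_int K / of_int Q \<and> \<bar>\<beta> i\<bar> \<le> of_int Rt) \<or> (\<exists>j<R. \<beta> i = a j)"
    and Qh: "0 < Qh" and Rh: "0 < Rh" and dvd: "Q dvd Qh" and RtRh: "Rt \<le> Rh"
    and fm: "f \<in> borel_measurable (lebesgue_Rp p)"
    and ps: "prob_space (density (lebesgue_Rp p) f)"
  define B where "B x = ira_input Qh p R a x (\<Sum>i<p. x i * \<beta> i)" for x
  define k where "k = 1 + p*R + p"
  have lenB: "length (B x) = k" for x unfolding B_def k_def by (rule ira_input_len)
  define isint where "isint i = (\<exists>K::int. \<beta> i = of_int K / of_int Q \<and> \<bar>\<beta> i\<bar> \<le> of_int Rt)" for i
  define Kf where "Kf i = (SOME K::int. \<beta> i = of_int K / of_int Q \<and> \<bar>\<beta> i\<bar> \<le> of_int Rt)" for i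
  define jf where "jf i = (SOME j. j < R \<and> \<beta> i = a j)" for i
  have Kf: "\<beta> i = of_int (Kf i) / of_int Q \<and> \<bar>\<beta> i\<bar> \<le> of_int Rt" if "isint i" for i
    using that unfolding isint_def Kf_def by (rule someI_ex)
  have jf: "jf i < R \<and> \<beta> i = a (jf i)" if "i < p" "\<not> isint i" for i
  proof -
    have "\<exists>j. j < R \<and> \<beta> i = a j" using beta that unfolding isint_def by blast
    then show ?thesis unfolding jf_def by (rule someI_ex)
  qed
  define G where "G i j = (if isint i then 0 else if j = jf i then - Qh else 0)" for i j
  define H where "H i = (if isint i then - (Kf i * (Qh div Q)) else 0)" for i
  define mf where "mf idx = (if idx = 0 then 1 else if idx - 1 < p*R then G ((idx-1) div R) ((idx-1) mod R)
      else H (idx - 1 - p*R))" for idx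
  define ms where "ms = map mf [0..<k]"
  have ms_len: "length ms = k" unfolding ms_def by simp
  have ms0: "ms ! 0 = 1" unfolding ms_def mf_def k_def by (simp del: upt_Suc add: nth_map_upt)
  have ms1: "ms ! (1 + i*R + j) = G i j" if "i < p" "j < R" for i j
  proof -
    have lt: "i*R+j < p*R"
    proof -
      have "i*R+j < i*R+R" using that by simp
      also have "\<dots> = Suc i * R" by simp
      also have "\<dots> \<le> p*R" using that by (intro mult_right_mono) auto
      finally show ?thesis .
    qed
    then have "1 + i*R + j < k" unfolding k_def by simp
    then show ?thesis unfolding ms_def mf_def using lt that by simp
  qed
  have ms2: "ms ! (1 + p*R + i) = H i" if "i < p" for i
  proof -
    have "1 + p*R + i < k" using that unfolding k_def by simp
    then show ?thesis unfolding ms_def mf_def using that by simp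
  qed
  have ms1': "ms ! Suc (i*R + j) = G i j" if "i < p" "j < R" for i j using ms1[OF that] by simp
  have ms2': "ms ! Suc (p*R + i) = H i" if "i < p" for i using ms2[OF that] by simp
  have coef_ms: "coef Qh p R a \<beta> ms i = 0" if "i < p" for i
  proof (cases "isint i")
    case True
    have QQ: "of_int Qh = (of_int Q :: real) * of_int (Qh div Q)"
      using dvd by (metis dvd_mult_div_cancel of_int_mult)
    have "of_int Qh * \<beta> i = of_int (Kf i) * (of_int (Qh div Q) :: real)"
      using Kf[OF True] Q unfolding QQ by simp
    then show ?thesis using True that unfolding coef_def
      by (simp add: ms0 ms1' ms2' G_def H_def)
  next
    case False
    from jf[OF that False] have j: "jf i < R" "\<beta> i = a (jf i)" by auto
    have "(\<Sum>j<R. of_int (ms ! (1 + i*R + j)) * a j) = (\<Sum>j<R. (if j = jf i then - of_int Qh * a j else 0))"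
      using that False by (intro sum.cong refl) (simp add: ms1' G_def)
    also have "\<dots> = - of_int Qh * a (jf i)" using j by simp
    finally show ?thesis using False that j unfolding coef_def by (simp add: ms0 ms2' H_def)
  qed
  have rel_ms: "is_int_rel (B x) ms" for x
  proof -
    have "(\<Sum>idx<length (B x). B x ! idx * of_int (ms ! idx)) = (\<Sum>i<p. x i * coef Qh p R a \<beta> ms i)"
      unfolding B_def by (rule rel_sum)
    also have "\<dots> = 0" using coef_ms by simp
    finally show ?thesis unfolding is_int_rel_def using ms_len lenB ms0 p unfolding k_def by auto
  qed
  define M where "M = Qh * Rh"
  have M1: "Qh \<le> M" "1 \<le> M" using Qh Rh unfolding M_def
    using mult_mono[of 1 Qh 1 Rh] mult_left_mono[of 1 Rh Qh] by auto
  have Gb: "\<bar>G i j\<bar> \<le> M" for i j using M1 Qh unfolding G_def by (simp split: if_split)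
  have Hb: "\<bar>H i\<bar> \<le> M" for i
  proof (cases "isint i")
    case True
    from Kf[OF True] have e: "\<beta> i = of_int (Kf i) / of_int Q" and b: "\<bar>\<beta> i\<bar> \<le> of_int Rt" by auto
    have Qr: "(0::real) < of_int Q" using Q by simp
    have "\<bar>(of_int (Kf i)::real)\<bar> = \<bar>\<beta> i\<bar> * of_int Q" unfolding e using Qr by (simp add: abs_divide)
    also have "\<dots> \<le> of_int Rt * of_int Q" using b Qr by (intro mult_right_mono) auto
    finally have "\<bar>(of_int (Kf i)::real)\<bar> \<le> of_int (Rt * Q)" by simp
    then have K: "\<bar>Kf i\<bar> \<le> Rt * Q" by linarith
    have qq: "0 \<le> Qh div Q" using Qh Q by (simp add: pos_imp_zdiv_nonneg_iff)
    have "\<bar>H i\<bar> = \<bar>Kf i\<bar> * (Qh div Q)" using True qq unfolding H_def by (simp add: abs_mult)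
    also have "\<dots> \<le> Rt * Q * (Qh div Q)" using K qq by (intro mult_right_mono) auto
    also have "\<dots> = Rt * Qh" using dvd by (simp add: mult.assoc)
    also have "\<dots> \<le> Rh * Qh" using RtRh Qh by (intro mult_right_mono) auto
    finally show ?thesis unfolding M_def by (simp add: mult.commute)
  next
    case False
    then show ?thesis using M1 by (simp add: H_def)
  qed
  have msb: "\<bar>ms ! idx\<bar> \<le> M" if "idx < k" for idx
  proof -
    have "ms ! idx = mf idx" unfolding ms_def using that by simp
    moreover have "\<bar>mf idx\<bar> \<le> M" unfolding mf_def using M1 Gb Hb by (simp split: if_split)
    ultimately show ?thesis by simp
  qed
  have norm_ms: "int_vec_norm ms \<le> sqrt (real k) * of_int M"
  proof -
    have "(\<Sum>i<length ms. (of_int (ms ! i) :: real)\<^sup>2) \<le> (\<Sum>i<k. (of_int M)\<^sup>2)"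
      unfolding ms_len
    proof (intro sum_mono)
      fix i assume "i \<in> {..<k}"
      then have "\<bar>(of_int (ms ! i)::real)\<bar> \<le> of_int M" using msb by (simp flip: of_int_abs)
      then have "\<bar>(of_int (ms ! i)::real)\<bar>^2 \<le> (of_int M)^2" by (intro power_mono) auto
      then show "(of_int (ms ! i)::real)\<^sup>2 \<le> (of_int M)\<^sup>2" by simp
    qed
    also have "\<dots> = real k * (of_int M)^2" by simp
    finally have "int_vec_norm ms \<le> sqrt (real k * (of_int M)^2)"
      unfolding int_vec_norm_def by simp
    also have "\<dots> = sqrt (real k) * of_int M" using M1 by (simp add: real_sqrt_mult)
    finally show ?thesis .
  qed
  define S where "S = real p + real R + ln (of_int Qh) + ln (of_int Rh) + 1"
  have lnQ: "0 \<le> ln (of_int Qh :: real)" "0 \<le> ln (of_int Rh :: real)" using Qh Rh by auto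
  have S1: "1 \<le> S" unfolding S_def using lnQ by simp
  have kS: "real k \<le> S^2"
  proof -
    have "real k \<le> (real p + real R + 1)^2" unfolding k_def by (simp add: power2_eq_square distrib_left distrib_right)
    also have "\<dots> \<le> S^2" unfolding S_def using lnQ by (intro power_mono) auto
    finally show ?thesis .
  qed
  have k1: "1 \<le> real k" unfolding k_def by simp
  have cost_b: "cost (B x) \<le> 3 * max C 0 * S^6" for x
  proof -
    have hr: "has_int_rel (B x)" using rel_ms unfolding has_int_rel_def by blast
    have c1: "cost (B x) \<le> C * (real k ^ 3 + real k ^ 2 * ln (min_rel_norm (B x)))"
      using assms[unfolded IRA_spec_def, rule_format, OF hr] unfolding lenB by simp
    note mb = min_rel_norm_bounds[OF rel_ms[of x]]
    define L where "L = ln (min_rel_norm (B x))"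
    have L0: "0 \<le> L" unfolding L_def using mb by simp
    have Mr: "(0::real) < of_int M" using M1 by simp
    have sk: "0 < sqrt (real k)" using k1 by simp
    have "L \<le> ln (sqrt (real k) * of_int M)"
      unfolding L_def using mb norm_ms by (subst ln_le_cancel_iff) auto
    also have "\<dots> = ln (sqrt (real k)) + ln (of_int Qh) + ln (of_int Rh)"
      using sk Qh Rh unfolding M_def by (simp add: ln_mult)
    also have "ln (sqrt (real k)) \<le> real k"
    proof -
      have "ln (sqrt (real k)) \<le> sqrt (real k) - 1" using sk by (rule ln_le_minus_one)
      also have "sqrt (real k) \<le> sqrt (real k) * sqrt (real k)"
        using k1 by (intro mult_le_cancel_left1[THEN iffD2]) auto
      also have "\<dots> = real k" by simp
      finally show ?thesis by simp
    qed
    finally have Lb: "L \<le> real k + (ln (of_int Qh) + ln (of_int Rh))" by simp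
    have Lq: "ln (of_int Qh) + ln (of_int Rh) \<le> S" unfolding S_def by simp
    have T: "real k ^ 3 + real k ^ 2 * L \<le> 3 * S^6"
      by (rule cost_arith[OF k1 kS S1 _ Lq Lb]) (use lnQ in simp)
    have T0: "0 \<le> real k ^ 3 + real k ^ 2 * L" using L0 by simp
    have "cost (B x) \<le> C * (real k ^ 3 + real k ^ 2 * L)" using c1 unfolding L_def .
    also have "\<dots> \<le> max C 0 * (real k ^ 3 + real k ^ 2 * L)" using T0 by (intro mult_right_mono) auto
    also have "\<dots> \<le> max C 0 * (3 * S^6)" using T by (intro mult_left_mono) auto
    finally show ?thesis by simp
  qed
  have AE1: "AE x in lebesgue_Rp p. \<forall>m. is_int_rel (B x) m \<longrightarrow> (\<forall>i<p. coef Qh p R a \<beta> m i = 0)"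
    unfolding AE_all_countable
  proof
    fix m :: "int list"
    show "AE x in lebesgue_Rp p. is_int_rel (B x) m \<longrightarrow> (\<forall>i<p. coef Qh p R a \<beta> m i = 0)"
    proof (cases "\<forall>i<p. coef Qh p R a \<beta> m i = 0")
      case True
      then show ?thesis by simp
    next
      case False
      then obtain i0 where i0: "i0 < p" "coef Qh p R a \<beta> m i0 \<noteq> 0" by blast
      from hyperplane_null[of i0 p "coef Qh p R a \<beta> m", OF i0] show ?thesis
      proof (rule eventually_mono)
        fix x assume nz: "(\<Sum>i<p. x i * coef Qh p R a \<beta> m i) \<noteq> 0"
        show "is_int_rel (B x) m \<longrightarrow> (\<forall>i<p. coef Qh p R a \<beta> m i = 0)"
        proof
          assume r: "is_int_rel (B x) m"
          then have "(\<Sum>idx<length (B x). B x ! idx * of_int (m ! idx)) = 0"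
            unfolding is_int_rel_def by blast
          then have "(\<Sum>i<p. x i * coef Qh p R a \<beta> m i) = 0"
            unfolding B_def rel_sum .
          with nz show "\<forall>i<p. coef Qh p R a \<beta> m i = 0" by blast
        qed
      qed
    qed
  qed
  have AE2: "AE x in density (lebesgue_Rp p) f. \<forall>m. is_int_rel (B x) m \<longrightarrow> (\<forall>i<p. coef Qh p R a \<beta> m i = 0)"
    by (rule absolutely_continuous_AE[OF _ absolutely_continuousI_density[OF fm] AE1]) simp
  show "AE x in density (lebesgue_Rp p) f.
        (let b = ira_input Qh p R a x (\<Sum>i<p. x i * \<beta> i) in
          (\<forall>i<p. decode Qh p R a (ira b) i = \<beta> i) \<and>
          cost b \<le> 3 * max C 0 * (real p + real R + ln (of_int Qh) + ln (of_int Rh) + 1) ^ 6)"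
    using AE2
  proof (rule eventually_mono)
    fix x assume H: "\<forall>m. is_int_rel (B x) m \<longrightarrow> (\<forall>i<p. coef Qh p R a \<beta> m i = 0)"
    have hr: "has_int_rel (B x)" using rel_ms unfolding has_int_rel_def by blast
    have ri: "is_int_rel (B x) (ira (B x))"
      using assms[unfolded IRA_spec_def, rule_format, OF hr] by simp
    have dec: "\<forall>i<p. decode Qh p R a (ira (B x)) i = \<beta> i"
    proof (intro allI impI)
      fix i assume ip: "i < p"
      show "decode Qh p R a (ira (B x)) i = \<beta> i"
        by (rule decode_ok[OF ind Qh _ _ _ ip])
          (use ri H lenB in \<open>auto simp: is_int_rel_def k_def\<close>)
    qed
    show "let b = ira_input Qh p R a x (\<Sum>i<p. x i * \<beta> i) in
          (\<forall>i<p. decode Qh p R a (ira b) i = \<beta> i) \<and>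
          cost b \<le> 3 * max C 0 * (real p + real R + ln (of_int Qh) + ln (of_int Rh) + 1) ^ 6"
      using dec cost_b[of x] unfolding B_def S_def Let_def by simp
  qed
qed

end
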